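(* Let $\mathcal S\subset\mathbb R^n$ be a finite positive spanning set of unit vectors. Then the optimization problem $$\text{(CMP)}\qquad \min_{v\in\mathbb R^n,\ \|v\|=1}\ \max_{d\in\mathcal S} d^\top v$$ is equivalent to the problem $$\text{(QP)}\qquad \max_{x\in\mathbb R^n}\ \|x\|^2\quad\text{subject to}\quad x\in P,\qquad P=\{x\in\mathbb R^n: x^\top d\le 1 \text{ for all } d\in\mathcal S\}.$$
   Context: A finite set $\mathcal S=\{d_1,\dots,d_k\}\subset\mathbb R^n$ is positive spanning if its positive span $\{\lambda_1d_1+\dots+\lambda_kd_k:\lambda_i\ge 0\}$ equals $\mathbb R^n$. $\|\cdot\|$ is the Euclidean norm. The equivalence shown in the paper is via the auxiliary problem (QCLP) $\min_{y\in\mathbb R^n,z\in\mathbb R} z$ subject to $y^\top d\le z$ for all $d\in\mathcal S$ and $\|y\|^2=1$ (which is equivalent to CMP): if $(y^*,z^* )$ is optimal for QCLP then $y^*/z^*$ is optimal for QP, and if $x^*$ is optimal for QP then $(x^*/\|x^*\|,1/\|x^*\|)$ is optimal for QCLP. *)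

theory Defs
  imports "HOL-Analysis.Analysis"
begin

definition pos_span :: "'a::real_vector set \<Rightarrow> 'a set" where
  "pos_span S = {x. \<exists>c. (\<forall>d\<in>S. 0 \<le> c d) \<and> x = (\<Sum>d\<in>S. c d *\<^sub>R d)}"

definition positive_spanning :: "'a::real_vector set \<Rightarrow> bool" where
  "positive_spanning S \<longleftrightarrow> pos_span S = UNIV"

definition cmp_obj :: "'a::real_inner set \<Rightarrow> 'a \<Rightarrow> real" where
  "cmp_obj S v = Max ((\<lambda>d. d \<bullet> v) ` S)"

definition cmp_optimal :: "'a::real_inner set \<Rightarrow> 'a \<Rightarrow> bool" where
  "cmp_optimal S v \<longleftrightarrow> norm v = 1 \<and> (\<forall>w. norm w = 1 \<longrightarrow> cmp_obj S v \<le> cmp_obj S w)"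

definition qp_feasible :: "'a::real_inner set \<Rightarrow> 'a set" where
  "qp_feasible S = {x. \<forall>d\<in>S. x \<bullet> d \<le> 1}"

definition qp_optimal :: "'a::real_inner set \<Rightarrow> 'a \<Rightarrow> bool" where
  "qp_optimal S x \<longleftrightarrow> x \<in> qp_feasible S \<and> (\<forall>y\<in>qp_feasible S. (norm y)\<^sup>2 \<le> (norm x)\<^sup>2)"

end

theory Submission
  imports Defs
begin

lemma max_cont:
  fixes T :: "'a::euclidean_space set"
  assumes "finite T" "T \<noteq> {}"
  shows "continuous_on A (\<lambda>v. Max ((\<lambda>d. d \<bullet> v) ` T))"
  using assms
proof (induction T rule: finite_ne_induct)
  case (singleton x)
  then show ?case by (simp add: continuous_intros)
next
  case (insert x F)
  have "(\<lambda>v. Max ((\<lambda>d. d \<bullet> v) ` insert x F)) = (\<lambda>v. max (x \<bullet> v) (Max ((\<lambda>d. d \<bullet> v) ` F)))"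
    using insert by (auto simp: Max_insert)
  then show ?case using insert by (auto intro!: continuous_intros)
qed

lemma obj_le_iff:
  assumes "finite S" "S \<noteq> {}"
  shows "cmp_obj S v \<le> a \<longleftrightarrow> (\<forall>d\<in>S. d \<bullet> v \<le> a)"
  using assms by (simp add: cmp_obj_def)

lemma obj_ge:
  assumes "finite S" "d \<in> S"
  shows "d \<bullet> v \<le> cmp_obj S v"
  using assms by (simp add: cmp_obj_def)

theorem theorem6:
  fixes S :: "'a::euclidean_space set"
  assumes "finite S"
    and "positive_spanning S"
    and "\<forall>d\<in>S. norm d = 1"
  shows "(\<forall>v. cmp_optimal S v \<longrightarrow>
            cmp_obj S v > 0 \<and> qp_optimal S (v /\<^sub>R cmp_obj S v))
       \<and> (\<forall>x. qp_optimal S x \<longrightarrow>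
            x \<noteq> 0 \<and> cmp_optimal S (x /\<^sub>R norm x) \<and> cmp_obj S (x /\<^sub>R norm x) = 1 / norm x)
       \<and> (\<exists>v. cmp_optimal S v) \<and> (\<exists>x. qp_optimal S x)"
proof -
  define f where "f = cmp_obj S"
  have pos: "\<exists>d\<in>S. d \<bullet> v > 0" if "v \<noteq> 0" for v
  proof (rule ccontr)
    assume c: "\<not> ?thesis"
    have "v \<in> pos_span S" using assms(2) by (simp add: positive_spanning_def)
    then obtain c where c0: "\<forall>d\<in>S. 0 \<le> c d" and v: "v = (\<Sum>d\<in>S. c d *\<^sub>R d)"
      by (auto simp: pos_span_def)
    have "v \<bullet> v = (\<Sum>d\<in>S. c d * (d \<bullet> v))" 
      by (subst (1) v) (simp add: inner_sum_left)
    also have "\<dots> \<le> 0" using c c0 by (intro sum_nonpos) (auto simp: mult_nonneg_nonpos)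
    finally show False using that by (simp add: inner_gt_zero_iff[symmetric] del: inner_gt_zero_iff)
  qed
  obtain b :: 'a where b: "b \<in> Basis" using nonempty_Basis by blast
  hence "b \<noteq> 0" by auto
  hence Sne: "S \<noteq> {}" using pos by blast
  have fpos: "f v > 0" if "v \<noteq> 0" for v
    using pos[OF that] obj_ge[OF assms(1)] unfolding f_def by (meson less_le_trans)
  have cont: "continuous_on (sphere 0 1) f"
    unfolding f_def cmp_obj_def by (rule max_cont[OF assms(1) Sne])
  have "sphere (0::'a) 1 \<noteq> {}" using b by (auto simp: norm_Basis)
  then obtain v0 where v0: "norm v0 = 1" and v0min: "\<forall>w. norm w = 1 \<longrightarrow> f v0 \<le> f w"
    using continuous_attains_inf[OF compact_sphere _ cont] by auto
  define m where "m = f v0"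
  have mpos: "m > 0" unfolding m_def using fpos v0 by (metis norm_zero zero_neq_one)
  have le_iff: "f v \<le> a \<longleftrightarrow> (\<forall>d\<in>S. d \<bullet> v \<le> a)" for v a
    unfolding f_def using obj_le_iff[OF assms(1) Sne] .
  have feas: "v /\<^sub>R a \<in> qp_feasible S" if "f v \<le> a" "a > 0" for v a
  proof -
    have "\<forall>d\<in>S. d \<bullet> v \<le> a" using that le_iff by blast
    thus ?thesis using that by (auto simp: qp_feasible_def inner_commute field_simps)
  qed
  have bound: "f (y /\<^sub>R norm y) \<le> 1 / norm y" if "y \<in> qp_feasible S" "y \<noteq> 0" for y
  proof -
    have "\<forall>d\<in>S. d \<bullet> (y /\<^sub>R norm y) \<le> 1 / norm y"
      using that by (auto simp: qp_feasible_def inner_commute field_simps)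
    thus ?thesis using le_iff by blast
  qed
  have unit: "norm (y /\<^sub>R norm y) = 1" if "y \<noteq> (0::'a)" for y using that by simp
  have normb: "norm y \<le> 1 / m" if "y \<in> qp_feasible S" "y \<noteq> 0" for y
  proof -
    have "m \<le> 1 / norm y" using order_trans[OF v0min[rule_format, OF unit[OF that(2)]] bound[OF that]] unfolding m_def .
    thus ?thesis using mpos that(2) by (simp add: field_simps)
  qed
  have part1: "f v > 0 \<and> qp_optimal S (v /\<^sub>R f v)" if "cmp_optimal S v" for v
  proof -
    have nv: "norm v = 1" and vmin: "\<forall>w. norm w = 1 \<longrightarrow> f v \<le> f w"
      using that by (auto simp: cmp_optimal_def f_def)
    have fv: "f v = m" using vmin v0min v0 nv unfolding m_def by (meson order_antisym)
    have fp: "f v > 0" using fv mpos by simp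
    have xf: "v /\<^sub>R f v \<in> qp_feasible S" using feas[OF order_refl fp] .
    have nx: "norm (v /\<^sub>R f v) = 1 / m" using nv fv mpos by (simp add: divide_inverse)
    have "(norm y)\<^sup>2 \<le> (norm (v /\<^sub>R f v))\<^sup>2" if "y \<in> qp_feasible S" for y
    proof (cases "y = 0")
      case True then show ?thesis by simp
    next
      case False
      then show ?thesis using normb[OF that False] nx by (simp add: power_mono)
    qed
    thus ?thesis using fp xf by (auto simp: qp_optimal_def)
  qed
  have x0f: "v0 /\<^sub>R m \<in> qp_feasible S" using feas[of v0 m] mpos unfolding m_def by simp
  have nx0: "norm (v0 /\<^sub>R m) = 1 / m" using v0 mpos by (simp add: divide_inverse)
  have part2: "x \<noteq> 0 \<and> cmp_optimal S (x /\<^sub>R norm x) \<and> f (x /\<^sub>R norm x) = 1 / norm x"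
    if xo: "qp_optimal S x" for x
  proof -
    have xf: "x \<in> qp_feasible S" and xm: "\<forall>y\<in>qp_feasible S. (norm y)\<^sup>2 \<le> (norm x)\<^sup>2"
      using xo by (auto simp: qp_optimal_def)
    have "(1/m)\<^sup>2 \<le> (norm x)\<^sup>2" using xm[rule_format, OF x0f] unfolding nx0 .
    hence ge: "1/m \<le> norm x" using mpos by (meson norm_ge_zero power2_le_imp_le)
    hence xn: "x \<noteq> 0" using mpos by auto
    have le: "norm x \<le> 1/m" using normb[OF xf xn] .
    have eq: "norm x = 1/m" using ge le by simp
    have fu: "f (x /\<^sub>R norm x) \<le> m" using bound[OF xf xn] eq mpos by simp
    have fu2: "m \<le> f (x /\<^sub>R norm x)" using v0min unit[OF xn] unfolding m_def by blast
    have opt: "cmp_optimal S (x /\<^sub>R norm x)"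
      unfolding cmp_optimal_def f_def[symmetric] using unit[OF xn] fu v0min unfolding m_def
      by force
    show ?thesis using xn opt fu fu2 eq mpos by simp
  qed
  have e1: "cmp_optimal S v0" unfolding cmp_optimal_def f_def[symmetric] using v0 v0min by blast
  show ?thesis using part1 part2 e1 part1[OF e1] unfolding f_def by blast
qed

end
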